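(* Let $F=(f_a)_{a\in D}$ be a planar analytic function on a region $D\subseteq\mathbb C$ and let $T\in\mathbb P$. Then the function $h_T:D\to\mathbb C$, $h_T(a)=\langle f_a,(x-a)^T\rangle$, is holomorphic on $D$.
   Context: Let $\mathbb P$ denote the set of finite planar reduced rooted trees (children of each vertex linearly ordered, no vertex with exactly one child), including the empty tree $\mathbf 1$ and the one-vertex tree $|$; $\deg(T)$ is the number of leaves, $L(T)$ the set of leaves. The algebra $\mathbb C\{x\}_{\mathbb P}$ has basis $\{x^T\}$, $x^{\mathbf 1}=1$, $x^|=x$, with $k$-linear operations $\omega_k$ ($k\ge2$), $\omega_k(x^{T_1},\dots,x^{T_k})=x^T$ where $T$ is obtained by attaching the nonempty $T_i$ in order as subtrees of the children of a new root (if exactly one is nonempty, $T$ is that one; if none, $T=\mathbf 1$); $y^T$ denotes the iteration along $T$ starting from $y$, e.g. $(x-a)^T$. $\mathbb C\{\{x-a\}\}_{\mathbb P}$ is the space of formal series $\sum_T\gamma_T(x-a)^T$ with coefficients $\langle f,(x-a)^T\rangle$. Radius of convergence: $\operatorname{rad}(\sum_T\gamma_T(x-a)^T)=\sup\{\rho\ge0:\sum_T|\gamma_T|\rho^{\deg T}<\infty\}$. Contraction $S|I$ for $I\subseteq L(S)$: the tree obtained from the subtree of $S$ spanned by the root-to-leaf paths to leaves in $I$ by suppressing all vertices with exactly one child; $(S/T)=\#\{I\subseteq L(S):S|I=T\}$. If $|b-a|<\operatorname{rad}(f)$, the expansion of $f\in\mathbb C\{\{x-a\}\}_{\mathbb P}$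 around $b$ is $\sum_T\gamma_T(b)(x-b)^T$ with $\gamma_T(b)=\sum_{U}\langle f,(x-a)^U\rangle(U/T)(b-a)^{\deg U-\deg T}$. A planar analytic function on a region $D$ is a family $F=(f_a)_{a\in D}$ with $f_a\in\mathbb C\{\{x-a\}\}_{\mathbb P}$, $\operatorname{rad}(f_a)>0$, such that whenever $a,b\in D$ and $\operatorname{rad}(f_a)>|b-a|$, the expansion of $f_a$ around $b$ equals $f_b$. *)

theory Defs
  imports "HOL-Analysis.Analysis"
begin

datatype ptree = Lf | Nd "ptree list"

fun reduced :: "ptree \<Rightarrow> bool" where
  "reduced Lf = True"
| "reduced (Nd ts) = (length ts \<ge> 2 \<and> (\<forall>t\<in>set ts. reduced t))"

(* The set P: None is the empty tree 1, Some Lf is the one-vertex tree | *)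
definition PTrees :: "ptree option set" where
  "PTrees = {None} \<union> Some ` {t. reduced t}"

fun deg :: "ptree \<Rightarrow> nat" where
  "deg Lf = 1"
| "deg (Nd ts) = sum_list (map deg ts)"

definition degP :: "ptree option \<Rightarrow> nat" where
  "degP T = (case T of None \<Rightarrow> 0 | Some t \<Rightarrow> deg t)"

(* Contraction: leaves are indexed 0..deg-1 from left to right. restr t I keeps the
   root-to-leaf paths to the leaves in I and suppresses vertices with exactly one child;
   restr_list returns the list of nonempty restricted children. *)
fun restr :: "ptree \<Rightarrow> nat set \<Rightarrow> ptree option"
and restr_list :: "ptree list \<Rightarrow> nat set \<Rightarrow> ptree list" where
  "restr Lf I = (if 0 \<in> I then Some Lf else None)"
| "restr (Nd ts) I = (case restr_list ts I of [] \<Rightarrow> None | [u] \<Rightarrow> Some u | us \<Rightarrow> Some (Nd us))"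
| "restr_list [] I = []"
| "restr_list (t # ts) I =
     (case restr t I of None \<Rightarrow> [] | Some u \<Rightarrow> [u])
     @ restr_list ts ((\<lambda>j. j - deg t) ` {j\<in>I. deg t \<le> j})"

definition contr :: "ptree option \<Rightarrow> nat set \<Rightarrow> ptree option" where
  "contr S I = (case S of None \<Rightarrow> None | Some s \<Rightarrow> restr s I)"

definition contr_count :: "ptree option \<Rightarrow> ptree option \<Rightarrow> nat" where
  "contr_count S T = card {I. I \<subseteq> {..<degP S} \<and> contr S I = T}"

(* A formal series sum_T gamma_T (x-a)^T is represented by its coefficient function
   gamma :: ptree option \<Rightarrow> complex (only values on PTrees matter). *)
definition rad :: "(ptree option \<Rightarrow> complex) \<Rightarrow> ereal" where
  "rad g = Sup {ereal \<rho> | \<rho>. \<rho> \<ge> 0 \<and>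
                 (\<lambda>T. norm (g T) * \<rho> ^ degP T) summable_on PTrees}"

(* coefficient gamma_T(b) of the expansion around b of the series g centred at a *)
definition expand :: "(ptree option \<Rightarrow> complex) \<Rightarrow> complex \<Rightarrow> complex \<Rightarrow> ptree option \<Rightarrow> complex" where
  "expand g a b T = (\<Sum>\<^sub>\<infinity>U\<in>PTrees. g U * of_nat (contr_count U T) * (b - a) ^ (degP U - degP T))"

definition region :: "complex set \<Rightarrow> bool" where
  "region D \<longleftrightarrow> open D \<and> connected D \<and> D \<noteq> {}"

definition planar_analytic :: "complex set \<Rightarrow> (complex \<Rightarrow> ptree option \<Rightarrow> complex) \<Rightarrow> bool" where
  "planar_analytic D F \<longleftrightarrow>
     (\<forall>a\<in>D. rad (F a) > 0) \<and>
     (\<forall>a\<in>D. \<forall>b\<in>D. ereal (cmod (b - a)) < rad (F a) \<longrightarrow>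
        (\<forall>T\<in>PTrees. expand (F a) a b T = F b T))"

end

theory Submission
  imports Defs "HOL-Complex_Analysis.Complex_Analysis"
begin

lemma pow_diff_bound:
  fixes r :: real assumes r: "r > 0"
  shows "r ^ (n - k) \<le> r ^ n * (1 + 1/r) ^ k"
proof (cases "k \<le> n")
  case True
  have "r ^ n = r ^ (n - k) * r ^ k" using True by (simp add: power_add[symmetric])
  hence "r ^ n * (1/r) ^ k = r ^ (n - k)" using r by (simp add: power_divide)
  moreover have "(1/r) ^ k \<le> (1 + 1/r) ^ k" using r by (intro power_mono) auto
  ultimately show ?thesis using r
    by (metis mult_left_mono zero_le_power less_imp_le)
next
  case False
  have "1 = r ^ n * (1/r) ^ n" using r by (simp add: power_divide)
  also have "\<dots> \<le> r ^ n * (1 + 1/r) ^ n" using r by (intro mult_left_mono power_mono) auto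
  also have "\<dots> \<le> r ^ n * (1 + 1/r) ^ k" using r False
    by (intro mult_left_mono power_increasing) auto
  finally show ?thesis using False by simp
qed

lemma contr_count_le: "contr_count U T \<le> 2 ^ degP U"
proof -
  have "contr_count U T \<le> card (Pow {..<degP U})"
    unfolding contr_count_def by (intro card_mono) auto
  thus ?thesis by (simp add: card_Pow)
qed

theorem mainTheorem5:
  fixes D :: "complex set" and F :: "complex \<Rightarrow> ptree option \<Rightarrow> complex" and T :: "ptree option"
  assumes "region D" and "planar_analytic D F" and "T \<in> PTrees"
  shows "(\<lambda>a. F a T) holomorphic_on D"
proof -
  have opn: "open D" using assms(1) unfolding region_def by auto
  have radpos: "\<And>a. a \<in> D \<Longrightarrow> rad (F a) > 0" and
       exp: "\<And>a b. a \<in> D \<Longrightarrow> b \<in> D \<Longrightarrow> ereal (cmod (b - a)) < rad (F a) \<Longrightarrow> expand (F a) a b T = F b T"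
    using assms(2,3) unfolding planar_analytic_def by auto
  have "(\<lambda>a. F a T) analytic_on D"
    unfolding analytic_on_def
  proof
    fix a assume a: "a \<in> D"
    define g where "g = F a"
    define k where "k = degP T"
    have "0 < Sup {ereal \<rho> | \<rho>. \<rho> \<ge> 0 \<and>
                 (\<lambda>T. norm (g T) * \<rho> ^ degP T) summable_on PTrees}"
      using radpos[OF a] unfolding g_def rad_def .
    then obtain \<rho> where rho0: "\<rho> \<ge> 0" and sm: "(\<lambda>T. norm (g T) * \<rho> ^ degP T) summable_on PTrees"
       and rpos': "0 < ereal \<rho>"
      by (auto simp: less_Sup_iff)
    have rpos: "\<rho> > 0" using rpos' by simp
    have rle: "ereal \<rho> \<le> rad g" unfolding rad_def
      by (rule Sup_upper) (use rho0 sm in auto)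
    obtain e where e: "e > 0" "ball a e \<subseteq> D" using opn a openE by blast
    define r where "r = min (e/2) (\<rho>/4)"
    have r0: "r > 0" using e rpos by (simp add: r_def)
    define C where "C = (1 + 1/r) ^ k"
    have C0: "C \<ge> 0" using r0 by (simp add: C_def)
    define f where "f = (\<lambda>U z. g U * of_nat (contr_count U T) * (z - a) ^ (degP U - k))"
    define M where "M = (\<lambda>U. norm (g U) * 2 ^ degP U * r ^ (degP U - k))"
    have Mle: "M U \<le> C * (norm (g U) * \<rho> ^ degP U)" for U
    proof -
      have "2 ^ degP U * r ^ (degP U - k) \<le> 2 ^ degP U * (r ^ degP U * C)"
        unfolding C_def using pow_diff_bound[OF r0] by (intro mult_left_mono) auto
      also have "\<dots> = (2 * r) ^ degP U * C" by (simp add: power_mult_distrib)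
      also have "\<dots> \<le> \<rho> ^ degP U * C"
        using r0 rpos C0 by (intro mult_right_mono power_mono) (auto simp: r_def)
      finally show ?thesis unfolding M_def
        by (metis (no_types, lifting) mult.assoc mult.commute mult_left_mono norm_ge_zero)
    qed
    have Msum: "M summable_on PTrees"
    proof (rule summable_on_comparison_test)
      show "(\<lambda>U. C * (norm (g U) * \<rho> ^ degP U)) summable_on PTrees"
        using sm by (rule summable_on_cmult_right)
      show "\<And>x. x \<in> PTrees \<Longrightarrow> M x \<le> C * (norm (g x) * \<rho> ^ degP x)"
        by (rule Mle)
      show "\<And>x. x \<in> PTrees \<Longrightarrow> 0 \<le> M x"
        using r0 by (simp add: M_def)
    qed
    have fle: "norm (f U z) \<le> M U" if "z \<in> cball a r" for U z
    proof -
      have "norm (f U z) = norm (g U) * of_nat (contr_count U T) * cmod (z - a) ^ (degP U - k)"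
        by (simp add: f_def norm_mult norm_power)
      also have "\<dots> \<le> norm (g U) * 2 ^ degP U * r ^ (degP U - k)"
        using that contr_count_le[of U T]
        by (intro mult_mono power_mono) (auto simp: dist_norm norm_minus_commute)
      finally show ?thesis by (simp add: M_def)
    qed
    have ul: "uniform_limit (cball a r) (\<lambda>X z. \<Sum>U\<in>X. f U z) (\<lambda>z. \<Sum>\<^sub>\<infinity>U\<in>PTrees. f U z) (finite_subsets_at_top PTrees)"
      by (rule Weierstrass_m_test_general[OF fle Msum])
    have "(\<lambda>z. \<Sum>\<^sub>\<infinity>U\<in>PTrees. f U z) holomorphic_on ball a r"
    proof (rule holomorphic_uniform_limit[OF _ ul])
      show "\<forall>\<^sub>F X in finite_subsets_at_top PTrees. continuous_on (cball a r) (\<lambda>z. \<Sum>U\<in>X. f U z) \<and>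
          (\<lambda>z. \<Sum>U\<in>X. f U z) holomorphic_on ball a r"
      proof (intro always_eventually allI conjI)
        fix X
        have hol: "(\<lambda>z. \<Sum>U\<in>X. f U z) holomorphic_on UNIV"
          unfolding f_def by (intro holomorphic_on_sum holomorphic_intros)
        show "continuous_on (cball a r) (\<lambda>z. \<Sum>U\<in>X. f U z)"
          using holomorphic_on_imp_continuous_on[OF hol] by (rule continuous_on_subset) simp
        show "(\<lambda>z. \<Sum>U\<in>X. f U z) holomorphic_on ball a r"
          using hol by (rule holomorphic_on_subset) simp
      qed
    qed auto
    moreover have "\<And>z. z \<in> ball a r \<Longrightarrow> (\<Sum>\<^sub>\<infinity>U\<in>PTrees. f U z) = F z T"
    proof -
      fix z assume z: "z \<in> ball a r"
      have zD: "z \<in> D" using z e r0 by (auto simp: r_def)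
      have "ereal (cmod (z - a)) < ereal \<rho>" using z rpos
        by (auto simp: r_def dist_norm norm_minus_commute)
      also note rle
      finally have "expand (F a) a z T = F z T" using exp[OF a zD] by (simp add: g_def)
      thus "(\<Sum>\<^sub>\<infinity>U\<in>PTrees. f U z) = F z T" by (simp add: expand_def f_def g_def k_def)
    qed
    ultimately have "(\<lambda>z. F z T) holomorphic_on ball a r"
      by (rule holomorphic_transform)
    thus "\<exists>e>0. (\<lambda>a. F a T) holomorphic_on ball a e" using r0 by blast
  qed
  thus ?thesis by (rule analytic_imp_holomorphic)
qed

end
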